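(* Let $(D,\mu,\alpha)$ be a Hom-associative algebra over a field $k$ and let $T:D\otimes D\to D\otimes D$ be a linear map. Assume there exist linear maps $\tilde T_1,\tilde T_2:D\otimes D\otimes D\to D\otimes D\otimes D$ such that $(\alpha\otimes\alpha)\circ T=T\circ(\alpha\otimes\alpha)$, $T\circ(\alpha\otimes\mu)=(\alpha\otimes\mu)\circ\tilde T_1\circ(T\otimes \mathrm{id}_D)$, $T\circ(\mu\otimes\alpha)=(\mu\otimes\alpha)\circ\tilde T_2\circ(\mathrm{id}_D\otimes T)$, $\tilde T_1\circ(T\otimes \mathrm{id}_D)\circ(\mathrm{id}_D\otimes T)=\tilde T_2\circ(\mathrm{id}_D\otimes T)\circ(T\otimes \mathrm{id}_D)$. Then $(D,\mu\circ T,\alpha)$ is also a Hom-associative algebra.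
   Context: All algebras are over a field $k$ and are not assumed unital. A Hom-associative algebra is a triple $(A,\mu,\alpha)$ with $A$ a vector space and $\mu:A\otimes A\to A$ (written $\mu(a\otimes a')=aa'$), $\alpha:A\to A$ linear maps such that $\alpha(aa')=\alpha(a)\alpha(a')$ and $\alpha(a)(a'a'')=(aa')\alpha(a'')$ for all $a,a',a''\in A$. Such a $T$ is called a Hom-pseudotwistor with companions $\tilde T_1,\tilde T_2$. *)

theory Defs
  imports Complex_Main "HOL-Library.Poly_Mapping"
begin

(* Model: a k-vector space D is represented (up to isomorphism) as the space of
finitely supported functions 'b \<Rightarrow>_0 'k on a basis 'b. Then D \<otimes> D is
('b \<times> 'b) \<Rightarrow>_0 'k and D \<otimes> D \<otimes> D is ('b \<times> 'b \<times> 'b) \<Rightarrow>_0 'k. *)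

definition smul :: "'k::field \<Rightarrow> ('i \<Rightarrow>\<^sub>0 'k) \<Rightarrow> ('i \<Rightarrow>\<^sub>0 'k)" where
  "smul c u = Poly_Mapping.map (\<lambda>x. c * x) u"

definition lext :: "('i \<Rightarrow> ('j \<Rightarrow>\<^sub>0 'k::field)) \<Rightarrow> ('i \<Rightarrow>\<^sub>0 'k) \<Rightarrow> ('j \<Rightarrow>\<^sub>0 'k)" where
  "lext g u = (\<Sum>i\<in>Poly_Mapping.keys u. smul (Poly_Mapping.lookup u i) (g i))"

definition bvec :: "'i \<Rightarrow> ('i \<Rightarrow>\<^sub>0 'k::field)" where
  "bvec i = Poly_Mapping.single i 1"

definition tens :: "('i \<Rightarrow>\<^sub>0 'k::field) \<Rightarrow> ('j \<Rightarrow>\<^sub>0 'k) \<Rightarrow> (('i \<times> 'j) \<Rightarrow>\<^sub>0 'k)" where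
  "tens x y = (\<Sum>i\<in>Poly_Mapping.keys x. \<Sum>j\<in>Poly_Mapping.keys y. Poly_Mapping.single (i, j) (Poly_Mapping.lookup x i * Poly_Mapping.lookup y j))"

definition tens3l :: "(('i \<times> 'i) \<Rightarrow>\<^sub>0 'k::field) \<Rightarrow> ('i \<Rightarrow>\<^sub>0 'k) \<Rightarrow> (('i \<times> 'i \<times> 'i) \<Rightarrow>\<^sub>0 'k)" where
  "tens3l u z = (\<Sum>pq\<in>Poly_Mapping.keys u. \<Sum>r\<in>Poly_Mapping.keys z.
      Poly_Mapping.single (fst pq, snd pq, r) (Poly_Mapping.lookup u pq * Poly_Mapping.lookup z r))"

definition bilinear_map :: "(('b \<Rightarrow>\<^sub>0 'k::field) \<Rightarrow> ('b \<Rightarrow>\<^sub>0 'k) \<Rightarrow> ('b \<Rightarrow>\<^sub>0 'k)) \<Rightarrow> bool" where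
  "bilinear_map m \<longleftrightarrow> (\<forall>a. Vector_Spaces.linear smul smul (m a)) \<and>
                       (\<forall>b. Vector_Spaces.linear smul smul (\<lambda>a. m a b))"

definition hom_assoc :: "(('b \<Rightarrow>\<^sub>0 'k::field) \<Rightarrow> ('b \<Rightarrow>\<^sub>0 'k) \<Rightarrow> ('b \<Rightarrow>\<^sub>0 'k))
    \<Rightarrow> (('b \<Rightarrow>\<^sub>0 'k) \<Rightarrow> ('b \<Rightarrow>\<^sub>0 'k)) \<Rightarrow> bool" where
  "hom_assoc m \<alpha> \<longleftrightarrow> bilinear_map m \<and> Vector_Spaces.linear smul smul \<alpha> \<and>
     (\<forall>a b. \<alpha> (m a b) = m (\<alpha> a) (\<alpha> b)) \<and>
     (\<forall>a b c. m (\<alpha> a) (m b c) = m (m a b) (\<alpha> c))"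

definition mu2 :: "(('b \<Rightarrow>\<^sub>0 'k::field) \<Rightarrow> ('b \<Rightarrow>\<^sub>0 'k) \<Rightarrow> ('b \<Rightarrow>\<^sub>0 'k))
    \<Rightarrow> (('b \<times> 'b) \<Rightarrow>\<^sub>0 'k) \<Rightarrow> ('b \<Rightarrow>\<^sub>0 'k)" where
  "mu2 m = lext (\<lambda>(i, j). m (bvec i) (bvec j))"

definition tmap2 :: "(('b \<Rightarrow>\<^sub>0 'k::field) \<Rightarrow> ('b \<Rightarrow>\<^sub>0 'k)) \<Rightarrow> (('b \<Rightarrow>\<^sub>0 'k) \<Rightarrow> ('b \<Rightarrow>\<^sub>0 'k))
    \<Rightarrow> (('b \<times> 'b) \<Rightarrow>\<^sub>0 'k) \<Rightarrow> (('b \<times> 'b) \<Rightarrow>\<^sub>0 'k)" where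
  "tmap2 f g = lext (\<lambda>(i, j). tens (f (bvec i)) (g (bvec j)))"

definition alpha_mu :: "(('b \<Rightarrow>\<^sub>0 'k::field) \<Rightarrow> ('b \<Rightarrow>\<^sub>0 'k))
    \<Rightarrow> (('b \<Rightarrow>\<^sub>0 'k) \<Rightarrow> ('b \<Rightarrow>\<^sub>0 'k) \<Rightarrow> ('b \<Rightarrow>\<^sub>0 'k))
    \<Rightarrow> (('b \<times> 'b \<times> 'b) \<Rightarrow>\<^sub>0 'k) \<Rightarrow> (('b \<times> 'b) \<Rightarrow>\<^sub>0 'k)" where
  "alpha_mu \<alpha> m = lext (\<lambda>(i, j, l). tens (\<alpha> (bvec i)) (m (bvec j) (bvec l)))"

definition mu_alpha :: "(('b \<Rightarrow>\<^sub>0 'k::field) \<Rightarrow> ('b \<Rightarrow>\<^sub>0 'k) \<Rightarrow> ('b \<Rightarrow>\<^sub>0 'k))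
    \<Rightarrow> (('b \<Rightarrow>\<^sub>0 'k) \<Rightarrow> ('b \<Rightarrow>\<^sub>0 'k))
    \<Rightarrow> (('b \<times> 'b \<times> 'b) \<Rightarrow>\<^sub>0 'k) \<Rightarrow> (('b \<times> 'b) \<Rightarrow>\<^sub>0 'k)" where
  "mu_alpha m \<alpha> = lext (\<lambda>(i, j, l). tens (m (bvec i) (bvec j)) (\<alpha> (bvec l)))"

definition T_id :: "((('b \<times> 'b) \<Rightarrow>\<^sub>0 'k::field) \<Rightarrow> (('b \<times> 'b) \<Rightarrow>\<^sub>0 'k))
    \<Rightarrow> (('b \<times> 'b \<times> 'b) \<Rightarrow>\<^sub>0 'k) \<Rightarrow> (('b \<times> 'b \<times> 'b) \<Rightarrow>\<^sub>0 'k)" where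
  "T_id T = lext (\<lambda>(i, j, l). tens3l (T (bvec (i, j))) (bvec l))"

definition id_T :: "((('b \<times> 'b) \<Rightarrow>\<^sub>0 'k::field) \<Rightarrow> (('b \<times> 'b) \<Rightarrow>\<^sub>0 'k))
    \<Rightarrow> (('b \<times> 'b \<times> 'b) \<Rightarrow>\<^sub>0 'k) \<Rightarrow> (('b \<times> 'b \<times> 'b) \<Rightarrow>\<^sub>0 'k)" where
  "id_T T = lext (\<lambda>(i, j, l). tens (bvec i) (T (bvec (j, l))))"

end

theory Submission
  imports Defs
begin

lemma lookup_smul[simp]: "Poly_Mapping.lookup (smul c u) i = c * Poly_Mapping.lookup u i"
  unfolding smul_def by (simp add: Poly_Mapping.map.rep_eq when_def)

lemma vs_smul: "vector_space (smul :: 'k::field \<Rightarrow> ('i \<Rightarrow>\<^sub>0 'k) \<Rightarrow> _)"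
  by unfold_locales (auto intro!: poly_mapping_eqI simp: lookup_add algebra_simps)

lemma linI:
  assumes "\<And>x y. f (x + y) = f x + f y" "\<And>c x. f (smul c x) = smul c (f x)"
  shows "Vector_Spaces.linear smul smul (f :: ('i \<Rightarrow>\<^sub>0 'k::field) \<Rightarrow> ('j \<Rightarrow>\<^sub>0 'k))"
  using assms vs_smul[where 'i='i and 'k='k] vs_smul[where 'i='j and 'k='k]
  by (simp add: Vector_Spaces.linear_iff)

lemma linD:
  assumes "Vector_Spaces.linear smul smul (f :: ('i \<Rightarrow>\<^sub>0 'k::field) \<Rightarrow> ('j \<Rightarrow>\<^sub>0 'k))"
  shows "f (x + y) = f x + f y" "f (smul c x) = smul c (f x)"
  using assms by (auto simp: Vector_Spaces.linear_iff)

lemma smul_zero_left[simp]: "smul 0 u = 0"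
  by (rule poly_mapping_eqI) simp

lemma lin_sum:
  assumes "Vector_Spaces.linear smul smul (f :: ('i \<Rightarrow>\<^sub>0 'k::field) \<Rightarrow> ('j \<Rightarrow>\<^sub>0 'k))"
  shows "f (sum g S) = (\<Sum>x\<in>S. f (g x))"
proof (induction S rule: infinite_finite_induct)
  case (infinite A) then show ?case
    using linD(2)[OF assms, of 0 0] by simp
next
  case empty then show ?case
    using linD(2)[OF assms, of 0 0] by simp
next
  case (insert x F) then show ?case by (simp add: linD(1)[OF assms])
qed

lemma smul_bvec: "smul c (bvec i) = Poly_Mapping.single i c"
  by (rule poly_mapping_eqI) (simp add: bvec_def lookup_single when_def)

lemma expand: "u = (\<Sum>i\<in>Poly_Mapping.keys u. smul (Poly_Mapping.lookup u i) (bvec i))"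
proof (rule poly_mapping_eqI)
  fix k
  show "Poly_Mapping.lookup u k = Poly_Mapping.lookup (\<Sum>i\<in>Poly_Mapping.keys u. smul (Poly_Mapping.lookup u i) (bvec i)) k"
    by (simp add: lookup_sum smul_bvec lookup_single when_def in_keys_iff)
qed

lemma lin_ext:
  assumes "Vector_Spaces.linear smul smul (f :: ('i \<Rightarrow>\<^sub>0 'k::field) \<Rightarrow> ('j \<Rightarrow>\<^sub>0 'k))"
  shows "f u = lext (\<lambda>i. f (bvec i)) u"
proof -
  have "f u = f (\<Sum>i\<in>Poly_Mapping.keys u. smul (Poly_Mapping.lookup u i) (bvec i))"
    using expand[of u] by simp
  also have "\<dots> = lext (\<lambda>i. f (bvec i)) u"
    unfolding lext_def lin_sum[OF assms] linD(2)[OF assms] ..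
  finally show ?thesis .
qed

lemma lin_eq:
  assumes "Vector_Spaces.linear smul smul (f :: ('i \<Rightarrow>\<^sub>0 'k::field) \<Rightarrow> ('j \<Rightarrow>\<^sub>0 'k))"
    "Vector_Spaces.linear smul smul g" "\<And>i. f (bvec i) = g (bvec i)"
  shows "f u = g u"
proof -
  have "f u = lext (\<lambda>i. f (bvec i)) u" by (rule lin_ext[OF assms(1)])
  also have "\<dots> = lext (\<lambda>i. g (bvec i)) u" using assms(3) by presburger
  also have "\<dots> = g u" by (rule lin_ext[OF assms(2), symmetric])
  finally show ?thesis .
qed

lemma lext_superset:
  assumes "finite S" "Poly_Mapping.keys u \<subseteq> S"
  shows "lext g u = (\<Sum>i\<in>S. smul (Poly_Mapping.lookup u i) (g i))"
  unfolding lext_def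
  by (rule sum.mono_neutral_left) (use assms in \<open>auto simp: in_keys_iff\<close>)

lemma smul_sum: "smul c (sum g S) = (\<Sum>x\<in>S. smul c (g x))"
  by (rule poly_mapping_eqI) (simp add: lookup_sum sum_distrib_left)

lemma smul_add_left: "smul (a + b) w = smul a w + smul b w"
  by (rule poly_mapping_eqI) (simp add: lookup_add algebra_simps)

lemma smul_smul: "smul c (smul a w) = smul (c * a) w"
  by (rule poly_mapping_eqI) (simp add: algebra_simps)

lemma lext_lin: "Vector_Spaces.linear smul smul (lext (g :: 'i \<Rightarrow> ('j \<Rightarrow>\<^sub>0 'k::field)))"
proof (rule linI)
  fix x y :: "'i \<Rightarrow>\<^sub>0 'k"
  let ?S = "Poly_Mapping.keys x \<union> Poly_Mapping.keys y"
  have "lext g (x + y) = (\<Sum>i\<in>?S. smul (Poly_Mapping.lookup (x+y) i) (g i))"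
    by (rule lext_superset) (auto simp: keys_add)
  also have "\<dots> = (\<Sum>i\<in>?S. smul (Poly_Mapping.lookup x i) (g i)) + (\<Sum>i\<in>?S. smul (Poly_Mapping.lookup y i) (g i))"
    by (simp add: lookup_add smul_add_left sum.distrib)
  also have "\<dots> = lext g x + lext g y"
    by (subst (1 2) lext_superset[where S = ?S]) auto
  finally show "lext g (x + y) = lext g x + lext g y" .
next
  fix c and x :: "'i \<Rightarrow>\<^sub>0 'k"
  have "lext g (smul c x) = (\<Sum>i\<in>Poly_Mapping.keys x. smul (Poly_Mapping.lookup (smul c x) i) (g i))"
    by (rule lext_superset) (auto simp: in_keys_iff)
  then show "lext g (smul c x) = smul c (lext g x)"
    by (simp add: lext_def smul_sum smul_smul)
qed

lemma smul_one[simp]: "smul 1 u = u"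
  by (rule poly_mapping_eqI) simp

lemma lext_bvec[simp]: "lext g (bvec i) = g i"
  by (simp add: lext_def bvec_def)

lemma sum_delta2:
  assumes "finite A" "finite B"
  shows "(\<Sum>a\<in>A. \<Sum>b\<in>B. if a = p \<and> b = q then c else 0) = (if p \<in> A \<and> q \<in> B then c else (0::'c::comm_monoid_add))"
proof -
  have "(\<Sum>a\<in>A. \<Sum>b\<in>B. if a = p \<and> b = q then c else 0) = (\<Sum>a\<in>A. if a = p then (\<Sum>b\<in>B. if b = q then c else 0) else 0)"
    by (intro sum.cong refl) auto
  also have "\<dots> = (if p \<in> A \<and> q \<in> B then c else 0)"
    using assms by (simp add: sum.delta)
  finally show ?thesis .
qed

lemma lookup_tens: "Poly_Mapping.lookup (tens x y) k = Poly_Mapping.lookup x (fst k) * Poly_Mapping.lookup y (snd k)"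
proof -
  obtain p q where k: "k = (p, q)" by force
  have "Poly_Mapping.lookup (tens x y) (p, q) = Poly_Mapping.lookup x p * Poly_Mapping.lookup y q"
    by (simp add: tens_def lookup_sum lookup_single when_def in_keys_iff if_distrib sum_delta2
        cong: if_cong conj_cong)
  then show ?thesis by (simp add: k)
qed

lemma lookup_tens3l: "Poly_Mapping.lookup (tens3l u z) (p, q, r) = Poly_Mapping.lookup u (p, q) * Poly_Mapping.lookup z r"
proof -
  have "Poly_Mapping.lookup (tens3l u z) (p, q, r) = (\<Sum>pq\<in>Poly_Mapping.keys u. \<Sum>r'\<in>Poly_Mapping.keys z.
      (if pq = (p, q) \<and> r' = r then Poly_Mapping.lookup u (p, q) * Poly_Mapping.lookup z r else 0))"
    unfolding tens3l_def lookup_sum lookup_single when_def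
    by (intro sum.cong refl) (auto simp: prod_eq_iff)
  also have "\<dots> = Poly_Mapping.lookup u (p, q) * Poly_Mapping.lookup z r"
    by (subst sum_delta2) (auto simp: in_keys_iff)
  finally show ?thesis .
qed

lemma tens_lin1: "Vector_Spaces.linear smul smul (\<lambda>x. tens x (y :: 'j \<Rightarrow>\<^sub>0 'k::field) :: ('i \<times> 'j) \<Rightarrow>\<^sub>0 'k)"
  by (rule linI; rule poly_mapping_eqI) (simp_all add: lookup_tens lookup_add algebra_simps)

lemma tens_lin2: "Vector_Spaces.linear smul smul (\<lambda>y. tens (x :: 'i \<Rightarrow>\<^sub>0 'k::field) y :: ('i \<times> 'j) \<Rightarrow>\<^sub>0 'k)"
  by (rule linI; rule poly_mapping_eqI) (simp_all add: lookup_tens lookup_add algebra_simps)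

lemma tens3l_lin1: "Vector_Spaces.linear smul smul (\<lambda>u. tens3l u (z :: 'i \<Rightarrow>\<^sub>0 'k::field))"
  by (rule linI; rule poly_mapping_eqI) (auto simp add: lookup_tens3l lookup_add algebra_simps)

lemma tens3l_lin2: "Vector_Spaces.linear smul smul (\<lambda>z. tens3l u (z :: 'i \<Rightarrow>\<^sub>0 'k::field))"
  by (rule linI; rule poly_mapping_eqI) (auto simp add: lookup_tens3l lookup_add algebra_simps)

lemma lookup_bvec: "Poly_Mapping.lookup (bvec i) j = (if i = j then 1 else 0)"
  by (simp add: bvec_def lookup_single when_def)

lemma tens_bvec: "tens (bvec i) (bvec j) = (bvec (i, j) :: _ \<Rightarrow>\<^sub>0 'k::field)"
  by (rule poly_mapping_eqI) (auto simp: lookup_tens lookup_bvec)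

lemma tens3l_bvec: "tens3l (bvec (i, j)) (bvec l) = (bvec (i, j, l) :: _ \<Rightarrow>\<^sub>0 'k::field)"
  by (rule poly_mapping_eqI) (auto simp: lookup_tens3l lookup_bvec split: if_splits)

lemma tens3l_tens: "tens3l (tens a b) c = tens a (tens b c)"
  by (rule poly_mapping_eqI) (auto simp: lookup_tens3l lookup_tens)

lemma lin_comp: "Vector_Spaces.linear smul smul (f :: ('i \<Rightarrow>\<^sub>0 'k::field) \<Rightarrow> ('j \<Rightarrow>\<^sub>0 'k)) \<Longrightarrow>
  Vector_Spaces.linear smul smul (g :: ('j \<Rightarrow>\<^sub>0 'k) \<Rightarrow> ('l \<Rightarrow>\<^sub>0 'k)) \<Longrightarrow>
  Vector_Spaces.linear smul smul (\<lambda>x. g (f x))"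
  by (rule linI) (simp_all add: linD)

lemma bilin_eq:
  fixes P Q :: "('i \<Rightarrow>\<^sub>0 'k::field) \<Rightarrow> ('j \<Rightarrow>\<^sub>0 'k) \<Rightarrow> ('l \<Rightarrow>\<^sub>0 'k)"
  assumes "\<And>a. Vector_Spaces.linear smul smul (P a)" "\<And>b. Vector_Spaces.linear smul smul (\<lambda>a. P a b)"
    "\<And>a. Vector_Spaces.linear smul smul (Q a)" "\<And>b. Vector_Spaces.linear smul smul (\<lambda>a. Q a b)"
    "\<And>i j. P (bvec i) (bvec j) = Q (bvec i) (bvec j)"
  shows "P a b = Q a b"
proof -
  have "\<And>j. P a (bvec j) = Q a (bvec j)"
    by (rule lin_eq[OF assms(2) assms(4)]) (rule assms(5))
  then show ?thesis by (rule lin_eq[OF assms(1) assms(3)])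
qed

lemma bilD: "bilinear_map m \<Longrightarrow> Vector_Spaces.linear smul smul (m a)"
  "bilinear_map m \<Longrightarrow> Vector_Spaces.linear smul smul (\<lambda>a. m a b)"
  unfolding bilinear_map_def by auto

lemma mu2_lin: "Vector_Spaces.linear smul smul (mu2 m)"
  unfolding mu2_def by (rule lext_lin)

lemma mu2_bvec: "mu2 m (bvec (i, j)) = m (bvec i) (bvec j)"
  unfolding mu2_def by simp

lemma tmap2_lin: "Vector_Spaces.linear smul smul (tmap2 f g)"
  unfolding tmap2_def by (rule lext_lin)
lemma alpha_mu_lin: "Vector_Spaces.linear smul smul (alpha_mu f m)"
  unfolding alpha_mu_def by (rule lext_lin)
lemma mu_alpha_lin: "Vector_Spaces.linear smul smul (mu_alpha m f)"
  unfolding mu_alpha_def by (rule lext_lin)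
lemma T_id_lin: "Vector_Spaces.linear smul smul (T_id T)"
  unfolding T_id_def by (rule lext_lin)
lemma id_T_lin: "Vector_Spaces.linear smul smul (id_T T)"
  unfolding id_T_def by (rule lext_lin)

lemma mu2_tens:
  assumes "bilinear_map m"
  shows "mu2 m (tens a b) = m a b"
  apply (rule bilin_eq[where P = "\<lambda>a b. mu2 m (tens a b)"])
  subgoal by (rule lin_comp[OF tens_lin2 mu2_lin])
  subgoal by (rule lin_comp[OF tens_lin1 mu2_lin])
  subgoal by (rule bilD(1)[OF assms])
  subgoal by (rule bilD(2)[OF assms])
  subgoal by (simp add: tens_bvec mu2_bvec)
  done

lemma tmap2_tens:
  assumes "Vector_Spaces.linear smul smul f" "Vector_Spaces.linear smul smul g"
  shows "tmap2 f g (tens a b) = tens (f a) (g b)"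
  apply (rule bilin_eq[where P = "\<lambda>a b. tmap2 f g (tens a b)"])
  subgoal by (rule lin_comp[OF tens_lin2 tmap2_lin])
  subgoal by (rule lin_comp[OF tens_lin1 tmap2_lin])
  subgoal by (rule lin_comp[OF assms(2) tens_lin2])
  subgoal by (rule lin_comp[OF assms(1) tens_lin1])
  subgoal by (simp add: tens_bvec tmap2_def)
  done

lemma alpha_mu_tens:
  assumes "bilinear_map m" "Vector_Spaces.linear smul smul \<alpha>"
  shows "tens (\<alpha> a) (mu2 m v) = alpha_mu \<alpha> m (tens a v)"
  apply (rule bilin_eq[where P = "\<lambda>a v. tens (\<alpha> a) (mu2 m v)"])
  subgoal by (rule lin_comp[OF mu2_lin tens_lin2])
  subgoal by (rule lin_comp[OF assms(2) tens_lin1])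
  subgoal by (rule lin_comp[OF tens_lin2 alpha_mu_lin])
  subgoal by (rule lin_comp[OF tens_lin1 alpha_mu_lin])
  subgoal for i jl by (cases jl) (simp add: tens_bvec mu2_bvec alpha_mu_def)
  done

lemma id_T_tens:
  assumes "Vector_Spaces.linear smul smul T"
  shows "tens a (T v) = id_T T (tens a v)"
  apply (rule bilin_eq[where P = "\<lambda>a v. tens a (T v)"])
  subgoal by (rule lin_comp[OF assms tens_lin2])
  subgoal by (rule tens_lin1)
  subgoal by (rule lin_comp[OF tens_lin2 id_T_lin])
  subgoal by (rule lin_comp[OF tens_lin1 id_T_lin])
  subgoal for i jl by (cases jl) (simp add: tens_bvec id_T_def)
  done

lemma mu_alpha_tens:
  assumes "bilinear_map m" "Vector_Spaces.linear smul smul \<alpha>"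
  shows "tens (mu2 m u) (\<alpha> c) = mu_alpha m \<alpha> (tens3l u c)"
  apply (rule bilin_eq[where P = "\<lambda>u c. tens (mu2 m u) (\<alpha> c)"])
  subgoal by (rule lin_comp[OF assms(2) tens_lin2])
  subgoal by (rule lin_comp[OF mu2_lin tens_lin1])
  subgoal by (rule lin_comp[OF tens3l_lin2 mu_alpha_lin])
  subgoal by (rule lin_comp[OF tens3l_lin1 mu_alpha_lin])
  subgoal for ij l by (cases ij) (simp add: tens3l_bvec mu2_bvec mu_alpha_def)
  done

lemma T_id_tens:
  assumes "Vector_Spaces.linear smul smul T"
  shows "tens3l (T u) c = T_id T (tens3l u c)"
  apply (rule bilin_eq[where P = "\<lambda>u c. tens3l (T u) c"])
  subgoal by (rule tens3l_lin2)
  subgoal by (rule lin_comp[OF assms tens3l_lin1])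
  subgoal by (rule lin_comp[OF tens3l_lin2 T_id_lin])
  subgoal by (rule lin_comp[OF tens3l_lin1 T_id_lin])
  subgoal for ij l by (cases ij) (simp add: tens3l_bvec T_id_def)
  done

lemma mu2_assoc:
  assumes "hom_assoc m \<alpha>"
  shows "mu2 m (alpha_mu \<alpha> m x) = mu2 m (mu_alpha m \<alpha> x)"
proof -
  have b: "bilinear_map m" using assms by (simp add: hom_assoc_def)
  have as: "m (\<alpha> a) (m b c) = m (m a b) (\<alpha> c)" for a b c using assms by (simp add: hom_assoc_def)
  show ?thesis
    apply (rule lin_eq[where f = "\<lambda>x. mu2 m (alpha_mu \<alpha> m x)"])
    subgoal by (rule lin_comp[OF alpha_mu_lin mu2_lin])
    subgoal by (rule lin_comp[OF mu_alpha_lin mu2_lin])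
    subgoal for ijl by (cases ijl) (simp add: alpha_mu_def mu_alpha_def mu2_tens[OF b] as)
    done
qed

lemma alpha_mu2:
  assumes "hom_assoc m \<alpha>"
  shows "\<alpha> (mu2 m u) = mu2 m (tmap2 \<alpha> \<alpha> u)"
proof -
  have b: "bilinear_map m" and la: "Vector_Spaces.linear smul smul \<alpha>"
    and mu: "\<alpha> (m a b) = m (\<alpha> a) (\<alpha> b)" for a b using assms by (simp_all add: hom_assoc_def)
  show ?thesis
    apply (rule lin_eq[where f = "\<lambda>x. \<alpha> (mu2 m x)"])
    subgoal by (rule lin_comp[OF mu2_lin la])
    subgoal by (rule lin_comp[OF tmap2_lin mu2_lin])
    subgoal for ij by (cases ij) (simp add: tmap2_def mu2_bvec mu2_tens[OF b] mu)
    done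
qed

theorem proposition2p1:
  fixes m :: "('b \<Rightarrow>\<^sub>0 'k::field) \<Rightarrow> ('b \<Rightarrow>\<^sub>0 'k) \<Rightarrow> ('b \<Rightarrow>\<^sub>0 'k)"
    and \<alpha> :: "('b \<Rightarrow>\<^sub>0 'k) \<Rightarrow> ('b \<Rightarrow>\<^sub>0 'k)"
    and T :: "(('b \<times> 'b) \<Rightarrow>\<^sub>0 'k) \<Rightarrow> (('b \<times> 'b) \<Rightarrow>\<^sub>0 'k)"
  assumes HA: "hom_assoc m \<alpha>"
    and linT: "Vector_Spaces.linear smul smul T"
    and ex: "\<exists>T1 T2 :: (('b \<times> 'b \<times> 'b) \<Rightarrow>\<^sub>0 'k) \<Rightarrow> (('b \<times> 'b \<times> 'b) \<Rightarrow>\<^sub>0 'k).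
       Vector_Spaces.linear smul smul T1 \<and> Vector_Spaces.linear smul smul T2 \<and>
       tmap2 \<alpha> \<alpha> \<circ> T = T \<circ> tmap2 \<alpha> \<alpha> \<and>
       T \<circ> alpha_mu \<alpha> m = alpha_mu \<alpha> m \<circ> T1 \<circ> T_id T \<and>
       T \<circ> mu_alpha m \<alpha> = mu_alpha m \<alpha> \<circ> T2 \<circ> id_T T \<and>
       T1 \<circ> T_id T \<circ> id_T T = T2 \<circ> id_T T \<circ> T_id T"
  shows "hom_assoc (\<lambda>a b. mu2 m (T (tens a b))) \<alpha>"
proof -
  obtain T1 T2 where
    h1: "tmap2 \<alpha> \<alpha> \<circ> T = T \<circ> tmap2 \<alpha> \<alpha>" and
    h2: "T \<circ> alpha_mu \<alpha> m = alpha_mu \<alpha> m \<circ> T1 \<circ> T_id T" and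
    h3: "T \<circ> mu_alpha m \<alpha> = mu_alpha m \<alpha> \<circ> T2 \<circ> id_T T" and
    h4: "T1 \<circ> T_id T \<circ> id_T T = T2 \<circ> id_T T \<circ> T_id T"
    using ex by blast
  have b: "bilinear_map m" and la: "Vector_Spaces.linear smul smul \<alpha>"
    and mult: "\<And>a b. \<alpha> (m a b) = m (\<alpha> a) (\<alpha> b)"
    using HA by (auto simp: hom_assoc_def)
  let ?m = "\<lambda>a b. mu2 m (T (tens a b))"
  have bil: "bilinear_map ?m"
    unfolding bilinear_map_def
    using lin_comp[OF tens_lin2 lin_comp[OF linT mu2_lin]] lin_comp[OF tens_lin1 lin_comp[OF linT mu2_lin]]
    by blast
  have mul: "\<alpha> (?m a b) = ?m (\<alpha> a) (\<alpha> b)" for a b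
  proof -
    have "\<alpha> (?m a b) = mu2 m (tmap2 \<alpha> \<alpha> (T (tens a b)))" by (rule alpha_mu2[OF HA])
    also have "\<dots> = mu2 m (T (tmap2 \<alpha> \<alpha> (tens a b)))" using fun_cong[OF h1] by simp
    also have "\<dots> = ?m (\<alpha> a) (\<alpha> b)" by (simp add: tmap2_tens[OF la la])
    finally show ?thesis .
  qed
  have ass: "?m (\<alpha> a) (?m b c) = ?m (?m a b) (\<alpha> c)" for a b c
  proof -
    let ?X = "tens a (tens b c)"
    have "?m (\<alpha> a) (?m b c) = mu2 m (T (alpha_mu \<alpha> m (tens a (T (tens b c)))))"
      by (simp add: alpha_mu_tens[OF b la])
    also have "\<dots> = mu2 m (T (alpha_mu \<alpha> m (id_T T ?X)))"
      by (simp add: id_T_tens[OF linT])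
    also have "\<dots> = mu2 m (alpha_mu \<alpha> m (T1 (T_id T (id_T T ?X))))"
      using fun_cong[OF h2] by simp
    also have "\<dots> = mu2 m (alpha_mu \<alpha> m (T2 (id_T T (T_id T ?X))))"
      using fun_cong[OF h4] by simp
    also have "\<dots> = mu2 m (mu_alpha m \<alpha> (T2 (id_T T (T_id T ?X))))"
      by (rule mu2_assoc[OF HA])
    also have "\<dots> = mu2 m (T (mu_alpha m \<alpha> (T_id T ?X)))"
      using fun_cong[OF h3] by simp
    also have "\<dots> = mu2 m (T (mu_alpha m \<alpha> (tens3l (T (tens a b)) c)))"
      by (simp add: T_id_tens[OF linT] tens3l_tens)
    also have "\<dots> = ?m (?m a b) (\<alpha> c)"
      by (simp add: mu_alpha_tens[OF b la])
    finally show ?thesis .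
  qed
  show ?thesis unfolding hom_assoc_def using bil la mul ass by blast
qed

end
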